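(* Let $m,n\ge1$. For every instance $(Q,c,d)$ of BQAP1, $$\min_{a\in N,\,b\in M} f_1(x^a,y^b)\le \mathcal{A}_1(Q,c,d)\le \max_{a\in N,\,b\in M} f_1(x^a,y^b),$$ and for every instance $(Q',c',d')$ of BQAP2, $$\min_{a\in M,\,b\in N} f_2(x^a,y^b)\le \mathcal{A}_2(Q',c',d')\le \max_{a\in M,\,b\in N} f_2(x^a,y^b),$$ where (in both cases, with the appropriate dimensions) $x^a$ is the 0-1 matrix with $x^a_{ij}=1$ iff $j=a$, and $y^b$ is the 0-1 matrix with $y^b_{ij}=1$ iff $i=b$.
   Context: $M=\{1,\dots,m\}$, $N=\{1,\dots,n\}$. BQAP1: data $Q=(q_{ijk\ell})$ ($m\times n\times m\times n$ real array), real $m\times n$ matrices $c,d$; feasible solutions are pairs $(x,y)$ of $m\times n$ 0-1 matrices with $\sum_{j=1}^n x_{ij}=1$ for all $i\in M$ and $\sum_{i=1}^m y_{ij}=1$ for all $j\in N$; objective $f_1(x,y)=\sum_{i,k\in M}\sum_{j,\ell\in N} q_{ijk\ell}x_{ij}y_{k\ell}+\sum_{i\in M,j\in N}c_{ij}x_{ij}+\sum_{i\in M,j\in N}d_{ij}y_{ij}$. For BQAP1, $x^a,y^b$ are $m\times n$ matrices with $a\in N$, $b\in M$. BQAP2: data $Q$ ($m\times m\times n\times n$ real array), real $m\times m$ matrix $c$, real $n\times n$ matrix $d$; feasible solutions are pairs $(x,y)$ with $x$ an $m\times m$ 0-1 matrix with $\sum_{j=1}^m x_{ij}=1$ for all $i\in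 M$ and $y$ an $n\times n$ 0-1 matrix with $\sum_{i=1}^n y_{ij}=1$ for all $j\in N$; objective $f_2(x,y)=\sum_{i,j\in M}\sum_{k,\ell\in N} q_{ijk\ell}x_{ij}y_{k\ell}+\sum_{i,j\in M}c_{ij}x_{ij}+\sum_{i,j\in N}d_{ij}y_{ij}$. For BQAP2, $x^a$ is $m\times m$ with $a\in M$ and $y^b$ is $n\times n$ with $b\in N$. $\mathcal{A}_1$ (resp. $\mathcal{A}_2$) denotes the arithmetic mean of $f_1$ (resp. $f_2$) over all feasible solutions of BQAP1 (resp. BQAP2). *)

theory Defs
  imports Main Complex_Main
begin

(* Matrices are functions nat => nat => real, indexed from 1; a p x q matrix is
   required to vanish outside {1..p} x {1..q} so that the feasible sets are finite. *)

definition zero_one_mat :: "nat \<Rightarrow> nat \<Rightarrow> (nat \<Rightarrow> nat \<Rightarrow> real) \<Rightarrow> bool" where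
  "zero_one_mat p q x \<longleftrightarrow> (\<forall>i j. x i j \<in> {0, 1}) \<and>
     (\<forall>i j. \<not> (i \<in> {1..p} \<and> j \<in> {1..q}) \<longrightarrow> x i j = 0)"

definition row_assign :: "nat \<Rightarrow> nat \<Rightarrow> (nat \<Rightarrow> nat \<Rightarrow> real) set" where
  "row_assign p q = {x. zero_one_mat p q x \<and> (\<forall>i\<in>{1..p}. (\<Sum>j=1..q. x i j) = 1)}"

definition col_assign :: "nat \<Rightarrow> nat \<Rightarrow> (nat \<Rightarrow> nat \<Rightarrow> real) set" where
  "col_assign p q = {y. zero_one_mat p q y \<and> (\<forall>j\<in>{1..q}. (\<Sum>i=1..p. y i j) = 1)}"

definition xmat :: "nat \<Rightarrow> nat \<Rightarrow> nat \<Rightarrow> nat \<Rightarrow> nat \<Rightarrow> real" where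
  "xmat p q a = (\<lambda>i j. if i \<in> {1..p} \<and> j \<in> {1..q} \<and> j = a then 1 else 0)"

definition ymat :: "nat \<Rightarrow> nat \<Rightarrow> nat \<Rightarrow> nat \<Rightarrow> nat \<Rightarrow> real" where
  "ymat p q b = (\<lambda>i j. if i \<in> {1..p} \<and> j \<in> {1..q} \<and> i = b then 1 else 0)"

definition feas1 :: "nat \<Rightarrow> nat \<Rightarrow> ((nat \<Rightarrow> nat \<Rightarrow> real) \<times> (nat \<Rightarrow> nat \<Rightarrow> real)) set" where
  "feas1 m n = row_assign m n \<times> col_assign m n"

definition f1 :: "nat \<Rightarrow> nat \<Rightarrow> (nat \<Rightarrow> nat \<Rightarrow> nat \<Rightarrow> nat \<Rightarrow> real) \<Rightarrow>
    (nat \<Rightarrow> nat \<Rightarrow> real) \<Rightarrow> (nat \<Rightarrow> nat \<Rightarrow> real) \<Rightarrow>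
    (nat \<Rightarrow> nat \<Rightarrow> real) \<Rightarrow> (nat \<Rightarrow> nat \<Rightarrow> real) \<Rightarrow> real" where
  "f1 m n Q c d x y =
     (\<Sum>i=1..m. \<Sum>j=1..n. \<Sum>k=1..m. \<Sum>l=1..n. Q i j k l * x i j * y k l)
     + (\<Sum>i=1..m. \<Sum>j=1..n. c i j * x i j)
     + (\<Sum>i=1..m. \<Sum>j=1..n. d i j * y i j)"

definition A1 :: "nat \<Rightarrow> nat \<Rightarrow> (nat \<Rightarrow> nat \<Rightarrow> nat \<Rightarrow> nat \<Rightarrow> real) \<Rightarrow>
    (nat \<Rightarrow> nat \<Rightarrow> real) \<Rightarrow> (nat \<Rightarrow> nat \<Rightarrow> real) \<Rightarrow> real" where
  "A1 m n Q c d = (\<Sum>(x, y)\<in>feas1 m n. f1 m n Q c d x y) / real (card (feas1 m n))"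

definition feas2 :: "nat \<Rightarrow> nat \<Rightarrow> ((nat \<Rightarrow> nat \<Rightarrow> real) \<times> (nat \<Rightarrow> nat \<Rightarrow> real)) set" where
  "feas2 m n = row_assign m m \<times> col_assign n n"

definition f2 :: "nat \<Rightarrow> nat \<Rightarrow> (nat \<Rightarrow> nat \<Rightarrow> nat \<Rightarrow> nat \<Rightarrow> real) \<Rightarrow>
    (nat \<Rightarrow> nat \<Rightarrow> real) \<Rightarrow> (nat \<Rightarrow> nat \<Rightarrow> real) \<Rightarrow>
    (nat \<Rightarrow> nat \<Rightarrow> real) \<Rightarrow> (nat \<Rightarrow> nat \<Rightarrow> real) \<Rightarrow> real" where
  "f2 m n Q c d x y =
     (\<Sum>i=1..m. \<Sum>j=1..m. \<Sum>k=1..n. \<Sum>l=1..n. Q i j k l * x i j * y k l)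
     + (\<Sum>i=1..m. \<Sum>j=1..m. c i j * x i j)
     + (\<Sum>i=1..n. \<Sum>j=1..n. d i j * y i j)"

definition A2 :: "nat \<Rightarrow> nat \<Rightarrow> (nat \<Rightarrow> nat \<Rightarrow> nat \<Rightarrow> nat \<Rightarrow> real) \<Rightarrow>
    (nat \<Rightarrow> nat \<Rightarrow> real) \<Rightarrow> (nat \<Rightarrow> nat \<Rightarrow> real) \<Rightarrow> real" where
  "A2 m n Q c d = (\<Sum>(x, y)\<in>feas2 m n. f2 m n Q c d x y) / real (card (feas2 m n))"

end

theory Submission imports Defs begin

lemma gen_avg:
  fixes X :: "'u \<Rightarrow> nat \<Rightarrow> nat \<Rightarrow> real" and Y :: "'v \<Rightarrow> nat \<Rightarrow> nat \<Rightarrow> real"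
  assumes hX: "\<And>i j. i\<in>I \<Longrightarrow> j\<in>J \<Longrightarrow> (\<Sum>u\<in>U. X u i j) = real (card U) * \<alpha>"
    and hY: "\<And>k l. k\<in>K \<Longrightarrow> l\<in>L \<Longrightarrow> (\<Sum>v\<in>V. Y v k l) = real (card V) * \<beta>"
  shows "(\<Sum>(u,v)\<in>U\<times>V. (\<Sum>i\<in>I. \<Sum>j\<in>J. \<Sum>k\<in>K. \<Sum>l\<in>L. Q i j k l * X u i j * Y v k l)
      + (\<Sum>i\<in>I. \<Sum>j\<in>J. c i j * X u i j) + (\<Sum>k\<in>K. \<Sum>l\<in>L. d k l * Y v k l))
    = real (card U) * real (card V) * (\<alpha> * \<beta> * (\<Sum>i\<in>I. \<Sum>j\<in>J. \<Sum>k\<in>K. \<Sum>l\<in>L. Q i j k l)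
       + \<alpha> * (\<Sum>i\<in>I. \<Sum>j\<in>J. c i j) + \<beta> * (\<Sum>k\<in>K. \<Sum>l\<in>L. d k l))"
proof -
  have 1: "(\<Sum>u\<in>U. \<Sum>v\<in>V. \<Sum>i\<in>I. \<Sum>j\<in>J. \<Sum>k\<in>K. \<Sum>l\<in>L. Q i j k l * X u i j * Y v k l)
     = (\<Sum>i\<in>I. \<Sum>j\<in>J. \<Sum>k\<in>K. \<Sum>l\<in>L. Q i j k l * (\<Sum>u\<in>U. X u i j) * (\<Sum>v\<in>V. Y v k l))"
  proof -
    have e: "\<And>u. (\<Sum>v\<in>V. \<Sum>i\<in>I. \<Sum>j\<in>J. \<Sum>k\<in>K. \<Sum>l\<in>L. Q i j k l * X u i j * Y v k l)
      = (\<Sum>i\<in>I. \<Sum>j\<in>J. \<Sum>k\<in>K. \<Sum>l\<in>L. Q i j k l * X u i j * (\<Sum>v\<in>V. Y v k l))"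
      by (simp only: sum.swap[of _ V] sum_distrib_left)
    show ?thesis
      by (simp only: e sum.swap[of _ U] sum_distrib_right sum_distrib_left)
  qed
  also have "\<dots> = (\<Sum>i\<in>I. \<Sum>j\<in>J. \<Sum>k\<in>K. \<Sum>l\<in>L. Q i j k l * (real (card U) * \<alpha>) * (real (card V) * \<beta>))"
    by (intro sum.cong refl) (simp add: hX hY)
  finally have 1: "(\<Sum>u\<in>U. \<Sum>v\<in>V. \<Sum>i\<in>I. \<Sum>j\<in>J. \<Sum>k\<in>K. \<Sum>l\<in>L. Q i j k l * X u i j * Y v k l)
     = real (card U) * real (card V) * (\<alpha> * \<beta> * (\<Sum>i\<in>I. \<Sum>j\<in>J. \<Sum>k\<in>K. \<Sum>l\<in>L. Q i j k l))"
    by (simp add: sum_distrib_left sum_distrib_right mult_ac)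
  have 2: "(\<Sum>u\<in>U. \<Sum>i\<in>I. \<Sum>j\<in>J. c i j * X u i j) = real (card U) * (\<alpha> * (\<Sum>i\<in>I. \<Sum>j\<in>J. c i j))"
  proof -
    have "(\<Sum>u\<in>U. \<Sum>i\<in>I. \<Sum>j\<in>J. c i j * X u i j) = (\<Sum>i\<in>I. \<Sum>j\<in>J. c i j * (\<Sum>u\<in>U. X u i j))"
      by (simp only: sum.swap[of _ U] sum_distrib_left)
    also have "\<dots> = (\<Sum>i\<in>I. \<Sum>j\<in>J. c i j * (real (card U) * \<alpha>))"
      by (intro sum.cong refl) (simp add: hX)
    finally show ?thesis by (simp add: sum_distrib_left sum_distrib_right mult_ac)
  qed
  have 3: "(\<Sum>v\<in>V. \<Sum>k\<in>K. \<Sum>l\<in>L. d k l * Y v k l) = real (card V) * (\<beta> * (\<Sum>k\<in>K. \<Sum>l\<in>L. d k l))"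
  proof -
    have "(\<Sum>v\<in>V. \<Sum>k\<in>K. \<Sum>l\<in>L. d k l * Y v k l) = (\<Sum>k\<in>K. \<Sum>l\<in>L. d k l * (\<Sum>v\<in>V. Y v k l))"
      by (simp only: sum.swap[of _ V] sum_distrib_left)
    also have "\<dots> = (\<Sum>k\<in>K. \<Sum>l\<in>L. d k l * (real (card V) * \<beta>))"
      by (intro sum.cong refl) (simp add: hY)
    finally show ?thesis by (simp add: sum_distrib_left sum_distrib_right mult_ac)
  qed
  show ?thesis
    unfolding sum.cartesian_product[symmetric]
    apply (simp add: sum.distrib 1 3 flip: sum_distrib_left)
    apply (simp add: 2 algebra_simps)
    done
qed

lemma finite_zo: "finite {x. zero_one_mat p q x}"
proof -
  define A where "A = {1..p}\<times>{1..q}"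
  let ?S = "{g::nat\<times>nat\<Rightarrow>real. \<forall>z. (z \<in> A \<longrightarrow> g z \<in> {0,1}) \<and> (z \<notin> A \<longrightarrow> g z = 0)}"
  have fS: "finite ?S" by (rule finite_set_of_finite_funs) (simp_all add: A_def)
  have sub: "{x. zero_one_mat p q x} \<subseteq> curry ` ?S"
  proof
    fix x assume "x \<in> {x. zero_one_mat p q x}"
    then have z: "\<forall>i j. x i j \<in> {0, 1}" "\<forall>i j. \<not> (i \<in> {1..p} \<and> j \<in> {1..q}) \<longrightarrow> x i j = 0"
      unfolding zero_one_mat_def by auto
    have mem: "case_prod x \<in> ?S"
    proof (intro CollectI allI conjI impI)
      fix z :: "nat \<times> nat"
      show "case_prod x z \<in> {0,1}" using z(1) by (cases z) simp
      show "z \<notin> A \<Longrightarrow> case_prod x z = 0" using z(2) unfolding A_def by (cases z) auto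
    qed
    have eq: "x = curry (case_prod x)" by simp
    show "x \<in> curry ` ?S" by (rule image_eqI[where f=curry, OF eq mem])
  qed
  show ?thesis by (rule finite_subset[OF sub finite_imageI[OF fS]])
qed

lemma finite_row: "finite (row_assign p q)"
  by (rule finite_subset[OF _ finite_zo[of p q]]) (auto simp: row_assign_def)

lemma finite_col: "finite (col_assign p q)"
  by (rule finite_subset[OF _ finite_zo[of p q]]) (auto simp: col_assign_def)

definition sw :: "nat \<Rightarrow> nat \<Rightarrow> nat \<Rightarrow> nat" where
  "sw a b k = (if k = a then b else if k = b then a else k)"

lemma sw_sw[simp]: "sw a b (sw a b k) = k" by (simp add: sw_def)

lemma sw_ab[simp]: "sw a b a = b" "sw a b b = a" by (simp_all add: sw_def)

lemma sw_in: "a \<in> {1..q} \<Longrightarrow> b \<in> {1..q} \<Longrightarrow> (sw a b k \<in> {1..q}) = (k \<in> {1..q})"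
  by (auto simp: sw_def)

lemma sum_sw: "a \<in> {1..q} \<Longrightarrow> b \<in> {1..q} \<Longrightarrow> (\<Sum>k=1..q. g (sw a b k)) = (\<Sum>k=1..q. (g k::real))"
  by (rule sum.reindex_bij_witness[where i="sw a b" and j="sw a b"]) (auto simp: sw_def)

lemma row_swap:
  assumes a: "a \<in> {1..q}" and b: "b \<in> {1..q}"
  shows "(\<Sum>x\<in>row_assign p q. x i a) = (\<Sum>x\<in>row_assign p q. x i b)"
proof -
  let ?phi = "\<lambda>x. \<lambda>i k. x i (sw a b k)"
  have mem: "?phi x \<in> row_assign p q" if "x \<in> row_assign p q" for x
  proof -
    have z: "\<forall>i j. x i j \<in> {0, 1}" "\<forall>i j. \<not> (i \<in> {1..p} \<and> j \<in> {1..q}) \<longrightarrow> x i j = 0"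
      and r: "\<forall>i\<in>{1..p}. (\<Sum>j=1..q. x i j) = 1"
      using that unfolding row_assign_def zero_one_mat_def by auto
    have "zero_one_mat p q (?phi x)"
      unfolding zero_one_mat_def
    proof (intro conjI allI impI)
      fix i j show "x i (sw a b j) \<in> {0,1}" using z(1) by blast
    next
      fix i j assume "\<not> (i \<in> {1..p} \<and> j \<in> {1..q})"
      then have "\<not> (i \<in> {1..p} \<and> sw a b j \<in> {1..q})" using sw_in[OF a b, of j] by simp
      then show "x i (sw a b j) = 0" using z(2) by blast
    qed
    moreover have "\<forall>i\<in>{1..p}. (\<Sum>j=1..q. x i (sw a b j)) = 1"
      using r sum_sw[OF a b, of "x _"] by simp
    ultimately show ?thesis unfolding row_assign_def by simp
  qed
  show ?thesis
    by (rule sum.reindex_bij_witness[where i="?phi" and j="?phi"]) (auto simp: mem)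
qed

lemma row_sum:
  assumes i: "i \<in> {1..p}" and j: "j \<in> {1..q}"
  shows "(\<Sum>x\<in>row_assign p q. x i j) = real (card (row_assign p q)) * (1 / real q)"
proof -
  have q: "q \<ge> 1" using j by simp
  have "(\<Sum>k=1..q. \<Sum>x\<in>row_assign p q. x i k) = (\<Sum>x\<in>row_assign p q. \<Sum>k=1..q. x i k)"
    by (rule sum.swap)
  also have "\<dots> = (\<Sum>x\<in>row_assign p q. 1)"
    by (rule sum.cong) (use i in \<open>auto simp: row_assign_def\<close>)
  also have "\<dots> = real (card (row_assign p q))" by simp
  finally have 1: "(\<Sum>k=1..q. \<Sum>x\<in>row_assign p q. x i k) = real (card (row_assign p q))" .
  have "(\<Sum>k=1..q. \<Sum>x\<in>row_assign p q. x i k) = (\<Sum>k=1..q. \<Sum>x\<in>row_assign p q. x i j)"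
    by (rule sum.cong[OF refl]) (rule row_swap[OF _ j], simp)
  also have "\<dots> = real q * (\<Sum>x\<in>row_assign p q. x i j)" by simp
  finally show ?thesis using 1 q by (simp add: field_simps)
qed

lemma col_swap:
  assumes a: "a \<in> {1..p}" and b: "b \<in> {1..p}"
  shows "(\<Sum>y\<in>col_assign p q. y a l) = (\<Sum>y\<in>col_assign p q. y b l)"
proof -
  let ?phi = "\<lambda>y. \<lambda>k l. y (sw a b k) l"
  have mem: "?phi y \<in> col_assign p q" if "y \<in> col_assign p q" for y
  proof -
    have z: "\<forall>i j. y i j \<in> {0, 1}" "\<forall>i j. \<not> (i \<in> {1..p} \<and> j \<in> {1..q}) \<longrightarrow> y i j = 0"
      and r: "\<forall>j\<in>{1..q}. (\<Sum>i=1..p. y i j) = 1"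
      using that unfolding col_assign_def zero_one_mat_def by auto
    have "zero_one_mat p q (?phi y)"
      unfolding zero_one_mat_def
    proof (intro conjI allI impI)
      fix i j show "y (sw a b i) j \<in> {0,1}" using z(1) by blast
    next
      fix i j assume "\<not> (i \<in> {1..p} \<and> j \<in> {1..q})"
      then have "\<not> (sw a b i \<in> {1..p} \<and> j \<in> {1..q})" using sw_in[OF a b, of i] by simp
      then show "y (sw a b i) j = 0" using z(2) by blast
    qed
    moreover have "\<forall>j\<in>{1..q}. (\<Sum>i=1..p. y (sw a b i) j) = 1"
      using r sum_sw[OF a b, of "\<lambda>i. y i _"] by simp
    ultimately show ?thesis unfolding col_assign_def by simp
  qed
  show ?thesis
    by (rule sum.reindex_bij_witness[where i="?phi" and j="?phi"]) (auto simp: mem)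
qed

lemma col_sum:
  assumes k: "k \<in> {1..p}" and l: "l \<in> {1..q}"
  shows "(\<Sum>y\<in>col_assign p q. y k l) = real (card (col_assign p q)) * (1 / real p)"
proof -
  have p: "p \<ge> 1" using k by simp
  have "(\<Sum>i=1..p. \<Sum>y\<in>col_assign p q. y i l) = (\<Sum>y\<in>col_assign p q. \<Sum>i=1..p. y i l)"
    by (rule sum.swap)
  also have "\<dots> = (\<Sum>y\<in>col_assign p q. 1)"
    by (rule sum.cong) (use l in \<open>auto simp: col_assign_def\<close>)
  also have "\<dots> = real (card (col_assign p q))" by simp
  finally have 1: "(\<Sum>i=1..p. \<Sum>y\<in>col_assign p q. y i l) = real (card (col_assign p q))" .
  have "(\<Sum>i=1..p. \<Sum>y\<in>col_assign p q. y i l) = (\<Sum>i=1..p. \<Sum>y\<in>col_assign p q. y k l)"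
    by (rule sum.cong[OF refl]) (rule col_swap[OF _ k], simp)
  also have "\<dots> = real p * (\<Sum>y\<in>col_assign p q. y k l)" by simp
  finally show ?thesis using 1 p by (simp add: field_simps)
qed

lemma xmat_sum:
  assumes i: "i \<in> {1..p}" and j: "j \<in> {1..q}"
  shows "(\<Sum>a\<in>{1..q}. xmat p q a i j) = real (card {1..q}) * (1 / real q)"
proof -
  have "(\<Sum>a\<in>{1..q}. xmat p q a i j) = (\<Sum>a\<in>{1..q}. if a = j then 1 else 0)"
    by (rule sum.cong) (use i j in \<open>auto simp: xmat_def\<close>)
  also have "\<dots> = 1" using j by (simp add: sum.delta')
  finally show ?thesis using j by simp
qed

lemma ymat_sum:
  assumes k: "k \<in> {1..p}" and l: "l \<in> {1..q}"
  shows "(\<Sum>b\<in>{1..p}. ymat p q b k l) = real (card {1..p}) * (1 / real p)"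
proof -
  have "(\<Sum>b\<in>{1..p}. ymat p q b k l) = (\<Sum>b\<in>{1..p}. if b = k then 1 else 0)"
    by (rule sum.cong) (use k l in \<open>auto simp: ymat_def\<close>)
  also have "\<dots> = 1" using k by (simp add: sum.delta')
  finally show ?thesis using k by simp
qed

lemma xmat_mem: "q \<ge> 1 \<Longrightarrow> xmat p q 1 \<in> row_assign p q"
proof -
  assume q: "q \<ge> 1"
  have "(\<Sum>j=1..q. xmat p q 1 i j) = 1" if "i \<in> {1..p}" for i
  proof -
    have "(\<Sum>j=1..q. xmat p q 1 i j) = (\<Sum>j=1..q. if j = 1 then 1 else 0)"
      by (rule sum.cong) (use that in \<open>auto simp: xmat_def\<close>)
    then show ?thesis using q by (simp add: sum.delta)
  qed
  then show ?thesis unfolding row_assign_def zero_one_mat_def by (auto simp: xmat_def)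
qed

lemma ymat_mem: "p \<ge> 1 \<Longrightarrow> ymat p q 1 \<in> col_assign p q"
proof -
  assume p: "p \<ge> 1"
  have "(\<Sum>i=1..p. ymat p q 1 i j) = 1" if "j \<in> {1..q}" for j
  proof -
    have "(\<Sum>i=1..p. ymat p q 1 i j) = (\<Sum>i=1..p. if i = 1 then 1 else 0)"
      by (rule sum.cong) (use that in \<open>auto simp: ymat_def\<close>)
    then show ?thesis using p by (simp add: sum.delta)
  qed
  then show ?thesis unfolding col_assign_def zero_one_mat_def by (auto simp: ymat_def)
qed

lemma min_max_avg:
  fixes g :: "'a \<Rightarrow> real"
  assumes "finite S" "S \<noteq> {}" "sum g S = real (card S) * E"
  shows "Min (g ` S) \<le> E \<and> E \<le> Max (g ` S)"
proof -
  have c: "real (card S) > 0" using assms by auto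
  have "real (card S) * Min (g ` S) \<le> sum g S"
    using sum_bounded_below[of S "Min (g ` S)" g] assms(1) by auto
  then have 1: "Min (g ` S) \<le> E" using assms(3) c by (simp add: mult_le_cancel_left_pos)
  have "sum g S \<le> real (card S) * Max (g ` S)"
    using sum_bounded_above[of S g "Max (g ` S)"] assms(1) by auto
  then have 2: "E \<le> Max (g ` S)" using assms(3) c by (simp add: mult_le_cancel_left_pos)
  show ?thesis using 1 2 by simp
qed

theorem corollary1:
  fixes m n :: nat
    and Q Q' :: "nat \<Rightarrow> nat \<Rightarrow> nat \<Rightarrow> nat \<Rightarrow> real"
    and c d c' d' :: "nat \<Rightarrow> nat \<Rightarrow> real"
  assumes "m \<ge> 1" and "n \<ge> 1"
  shows "Min ((\<lambda>(a, b). f1 m n Q c d (xmat m n a) (ymat m n b)) ` ({1..n} \<times> {1..m}))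
           \<le> A1 m n Q c d
       \<and> A1 m n Q c d
           \<le> Max ((\<lambda>(a, b). f1 m n Q c d (xmat m n a) (ymat m n b)) ` ({1..n} \<times> {1..m}))
       \<and> Min ((\<lambda>(a, b). f2 m n Q' c' d' (xmat m m a) (ymat n n b)) ` ({1..m} \<times> {1..n}))
           \<le> A2 m n Q' c' d'
       \<and> A2 m n Q' c' d'
           \<le> Max ((\<lambda>(a, b). f2 m n Q' c' d' (xmat m m a) (ymat n n b)) ` ({1..m} \<times> {1..n}))"
proof -
  have m: "m \<ge> 1" and n: "n \<ge> 1" using assms by auto
  define E1 where "E1 = (1 / real n) * (1 / real m) * (\<Sum>i\<in>{1..m}. \<Sum>j\<in>{1..n}. \<Sum>k\<in>{1..m}. \<Sum>l\<in>{1..n}. Q i j k l)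
       + (1 / real n) * (\<Sum>i\<in>{1..m}. \<Sum>j\<in>{1..n}. c i j) + (1 / real m) * (\<Sum>k\<in>{1..m}. \<Sum>l\<in>{1..n}. d k l)"
  define E2 where "E2 = (1 / real m) * (1 / real n) * (\<Sum>i\<in>{1..m}. \<Sum>j\<in>{1..m}. \<Sum>k\<in>{1..n}. \<Sum>l\<in>{1..n}. Q' i j k l)
       + (1 / real m) * (\<Sum>i\<in>{1..m}. \<Sum>j\<in>{1..m}. c' i j) + (1 / real n) * (\<Sum>k\<in>{1..n}. \<Sum>l\<in>{1..n}. d' k l)"
  have s1: "(\<Sum>(a,b)\<in>{1..n} \<times> {1..m}. f1 m n Q c d (xmat m n a) (ymat m n b))
      = real (card {1..n}) * real (card {1..m}) * E1"
    unfolding f1_def E1_def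
    by (rule gen_avg[OF xmat_sum ymat_sum])
  have s1': "(\<Sum>(x,y)\<in>row_assign m n \<times> col_assign m n. f1 m n Q c d x y)
      = real (card (row_assign m n)) * real (card (col_assign m n)) * E1"
    unfolding f1_def E1_def
    by (rule gen_avg[where X="\<lambda>x. x" and Y="\<lambda>y. y", OF row_sum col_sum])
  have ne1: "row_assign m n \<noteq> {}" "col_assign m n \<noteq> {}" using xmat_mem[OF n] ymat_mem[OF m] by auto
  have a1: "A1 m n Q c d = E1"
    unfolding A1_def feas1_def using s1' ne1 finite_row[of m n] finite_col[of m n]
    by (simp add: card_cartesian_product)
  have r1: "Min ((\<lambda>(a, b). f1 m n Q c d (xmat m n a) (ymat m n b)) ` ({1..n} \<times> {1..m})) \<le> E1
     \<and> E1 \<le> Max ((\<lambda>(a, b). f1 m n Q c d (xmat m n a) (ymat m n b)) ` ({1..n} \<times> {1..m}))"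
    by (rule min_max_avg) (use m n s1 in \<open>simp_all add: card_cartesian_product\<close>)
  have s2: "(\<Sum>(a,b)\<in>{1..m} \<times> {1..n}. f2 m n Q' c' d' (xmat m m a) (ymat n n b))
      = real (card {1..m}) * real (card {1..n}) * E2"
    unfolding f2_def E2_def
    by (rule gen_avg[OF xmat_sum ymat_sum])
  have s2': "(\<Sum>(x,y)\<in>row_assign m m \<times> col_assign n n. f2 m n Q' c' d' x y)
      = real (card (row_assign m m)) * real (card (col_assign n n)) * E2"
    unfolding f2_def E2_def
    by (rule gen_avg[where X="\<lambda>x. x" and Y="\<lambda>y. y", OF row_sum col_sum])
  have ne2: "row_assign m m \<noteq> {}" "col_assign n n \<noteq> {}" using xmat_mem[OF m] ymat_mem[OF n] by auto
  have a2: "A2 m n Q' c' d' = E2"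
    unfolding A2_def feas2_def using s2' ne2 finite_row[of m m] finite_col[of n n]
    by (simp add: card_cartesian_product)
  have r2: "Min ((\<lambda>(a, b). f2 m n Q' c' d' (xmat m m a) (ymat n n b)) ` ({1..m} \<times> {1..n})) \<le> E2
     \<and> E2 \<le> Max ((\<lambda>(a, b). f2 m n Q' c' d' (xmat m m a) (ymat n n b)) ` ({1..m} \<times> {1..n}))"
    by (rule min_max_avg) (use m n s2 in \<open>simp_all add: card_cartesian_product\<close>)
  show ?thesis using r1 r2 a1 a2 by simp
qed

end
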